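(* Let $I\subset K[x_1,\ldots,x_n]$ be a nonzero graded ideal with generic tropical variety $\mathrm{gT}(I)$. If $\omega\in\mathrm{gT}(I)$, then $\sigma(\omega)\in\mathrm{gT}(I)$ for every $\sigma\in S_n$.
   Context: $K$ is an algebraically closed field of characteristic $0$ with trivial valuation. Each $g=(g_{ij})\in\mathrm{GL}_n(K)$ acts on $K[x_1,\ldots,x_n]$ by $x_i\mapsto\sum_j g_{ij}x_j$; $\mathrm{GL}_n(K)$ has the Zariski topology. For $f=\sum_\nu a_\nu x^\nu$ and $\omega\in\mathbb{R}^n$, $\mathrm{in}_\omega(f)$ is the sum of the terms with $\omega\cdot\nu$ minimal, and $T(I)=\{\omega:\mathrm{in}_\omega(f)\text{ is not a monomial for every }f\in I\}$ (viewed as a subfan of the Gröbner fan). The generic tropical variety $\mathrm{gT}(I)$ is the fan equal to $T(g(I))$ for all $g$ in some non-empty Zariski-open subset of $\mathrm{GL}_n(K)$; such a fan exists for every nonzero graded ideal (it is empty if $\dim I=0$). $S_n$ is the symmetric group, and for $\sigma\in S_n$, $\sigma(\omega)=(\omega_{\sigma(1)},\ldots,\omega_{\sigma(n)})$. *)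

theory Defs
  imports "HOL-Analysis.Analysis" "HOL-Library.Poly_Mapping" "HOL-Computational_Algebra.Polynomial"
begin

text \<open>Polynomials in the variables indexed by the finite type 'n with coefficients in 'a:
  finitely supported maps from exponent vectors (monomials) to coefficients.\<close>
type_synonym ('n, 'a) mpoly = "('n \<Rightarrow>\<^sub>0 nat) \<Rightarrow>\<^sub>0 'a"

definition Var :: "'n \<Rightarrow> ('n, 'a::comm_ring_1) mpoly" where
  "Var i = Poly_Mapping.single (Poly_Mapping.single i 1) 1"

definition Const :: "'a::comm_ring_1 \<Rightarrow> ('n, 'a) mpoly" where
  "Const c = Poly_Mapping.single 0 c"

definition mdeg :: "('n::finite \<Rightarrow>\<^sub>0 nat) \<Rightarrow> nat" where
  "mdeg m = (\<Sum>i\<in>UNIV. Poly_Mapping.lookup m i)"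

definition hcomp :: "nat \<Rightarrow> ('n::finite, 'a::comm_ring_1) mpoly \<Rightarrow> ('n, 'a) mpoly" where
  "hcomp d f = Poly_Mapping.mapp (\<lambda>m c. if mdeg m = d then c else 0) f"

definition is_ideal :: "('n, 'a::comm_ring_1) mpoly set \<Rightarrow> bool" where
  "is_ideal I \<longleftrightarrow> 0 \<in> I \<and> (\<forall>f\<in>I. \<forall>g\<in>I. f + g \<in> I) \<and> (\<forall>f\<in>I. \<forall>h. h * f \<in> I)"

definition graded_ideal :: "('n::finite, 'a::comm_ring_1) mpoly set \<Rightarrow> bool" where
  "graded_ideal I \<longleftrightarrow> is_ideal I \<and> (\<forall>f\<in>I. \<forall>d. hcomp d f \<in> I)"

definition subst :: "('n::finite \<Rightarrow> ('n, 'a::comm_ring_1) mpoly) \<Rightarrow> ('n, 'a) mpoly \<Rightarrow> ('n, 'a) mpoly" where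
  "subst \<phi> f = (\<Sum>m\<in>Poly_Mapping.keys f. Const (Poly_Mapping.lookup f m) * (\<Prod>i\<in>UNIV. \<phi> i ^ Poly_Mapping.lookup m i))"

definition mp_eval :: "('v::finite, 'a::comm_ring_1) mpoly \<Rightarrow> ('v \<Rightarrow> 'a) \<Rightarrow> 'a" where
  "mp_eval p a = (\<Sum>m\<in>Poly_Mapping.keys p. Poly_Mapping.lookup p m * (\<Prod>i\<in>UNIV. a i ^ Poly_Mapping.lookup m i))"

definition lin_act :: "'a::field^'n::finite^'n \<Rightarrow> ('n, 'a) mpoly \<Rightarrow> ('n, 'a) mpoly" where
  "lin_act g f = subst (\<lambda>i. \<Sum>j\<in>UNIV. Const (g$i$j) * Var j) f"

definition wdot :: "('n::finite \<Rightarrow> real) \<Rightarrow> ('n \<Rightarrow>\<^sub>0 nat) \<Rightarrow> real" where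
  "wdot \<omega> \<nu> = (\<Sum>i\<in>UNIV. \<omega> i * real (Poly_Mapping.lookup \<nu> i))"

definition in_form :: "('n::finite \<Rightarrow> real) \<Rightarrow> ('n, 'a::comm_ring_1) mpoly \<Rightarrow> ('n, 'a) mpoly" where
  "in_form \<omega> f = Poly_Mapping.mapp
     (\<lambda>m c. if wdot \<omega> m = Min (wdot \<omega> ` Poly_Mapping.keys f) then c else 0) f"

definition is_monomial :: "('n, 'a::comm_ring_1) mpoly \<Rightarrow> bool" where
  "is_monomial f \<longleftrightarrow> card (Poly_Mapping.keys f) = 1"

definition trop :: "('n::finite, 'a::comm_ring_1) mpoly set \<Rightarrow> ('n \<Rightarrow> real) set" where
  "trop I = {\<omega>. \<forall>f\<in>I. \<not> is_monomial (in_form \<omega> f)}"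

text \<open>Zariski-open subsets of GL_n(K): complements in GL_n of common zero sets of
  families of polynomials in the n^2 matrix entries.\<close>
definition zariski_open_GL :: "('a::field^'n::finite^'n) set \<Rightarrow> bool" where
  "zariski_open_GL U \<longleftrightarrow> (\<exists>P :: ('n \<times> 'n, 'a) mpoly set.
     U = {g. invertible g \<and> (\<exists>p\<in>P. mp_eval p (\<lambda>(i,j). g$i$j) \<noteq> 0)})"

definition is_generic_trop_var ::
  "('n::finite, 'a::field) mpoly set \<Rightarrow> ('n \<Rightarrow> real) set \<Rightarrow> bool" where
  "is_generic_trop_var I F \<longleftrightarrow> (\<exists>U :: ('a^'n^'n) set. zariski_open_GL U \<and> U \<noteq> {} \<and>
     (\<forall>g\<in>U. trop (lin_act g ` I) = F))"

end

theory Submission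
  imports Defs
begin


lemma mp_eval_linear_poly:
  fixes p :: "('v::finite, 'a::field) mpoly"
  shows "\<exists>D. \<forall>t. mp_eval p (\<lambda>v. \<alpha> v + t * \<beta> v) = poly D t"
proof -
  let ?D = "\<Sum>m\<in>Poly_Mapping.keys p. [:Poly_Mapping.lookup p m:] * (\<Prod>i\<in>UNIV. [:\<alpha> i, \<beta> i:] ^ Poly_Mapping.lookup m i)"
  show ?thesis
    by (rule exI[of _ ?D]) (simp add: mp_eval_def poly_sum poly_prod algebra_simps)
qed

lemma det_linear_poly:
  fixes A B :: "'a::field^'n::finite^'n"
  shows "\<exists>D. \<forall>t. det (\<chi> i j. A$i$j + t * B$i$j) = poly D t"
proof -
  let ?D = "\<Sum>p\<in>{p. p permutes (UNIV::'n set)}. [:of_int (sign p):] * (\<Prod>i\<in>UNIV. [:A$i$(p i), B$i$(p i):])"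
  show ?thesis
    by (rule exI[of _ ?D]) (simp add: det_def poly_sum poly_prod algebra_simps)
qed

lemma avoid_roots:
  fixes Ds :: "'a::field_char_0 poly set"
  assumes "finite Ds" "0 \<notin> Ds"
  shows "\<exists>t. \<forall>D\<in>Ds. poly D t \<noteq> 0"
proof -
  have "finite (\<Union>D\<in>Ds. {t. poly D t = 0})"
    using assms by (auto intro: poly_roots_finite)
  then obtain t where "t \<notin> (\<Union>D\<in>Ds. {t. poly D t = 0})"
    using infinite_UNIV_char_0[where 'a='a] by (metis ex_new_if_finite)
  thus ?thesis by auto
qed



definition mren :: "('n \<Rightarrow> 'n) \<Rightarrow> ('n \<Rightarrow>\<^sub>0 nat) \<Rightarrow> ('n \<Rightarrow>\<^sub>0 nat)" where
  "mren \<pi> m = Poly_Mapping.map_key \<pi> m"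

definition pren :: "('n \<Rightarrow> 'n) \<Rightarrow> ('n, 'a::comm_ring_1) mpoly \<Rightarrow> ('n, 'a) mpoly" where
  "pren \<pi> f = Poly_Mapping.map_key (mren \<pi>) f"

lemma lookup_mren: "bij \<pi> \<Longrightarrow> Poly_Mapping.lookup (mren \<pi> m) i = Poly_Mapping.lookup m (\<pi> i)"
  by (simp add: mren_def Poly_Mapping.map_key.rep_eq bij_is_inj)

lemma mren_add: "bij \<pi> \<Longrightarrow> mren \<pi> (a + b) = mren \<pi> a + mren \<pi> b"
  by (rule poly_mapping_eqI) (simp add: lookup_mren lookup_add)

lemma mren_0: "bij \<pi> \<Longrightarrow> mren \<pi> 0 = 0"
  by (rule poly_mapping_eqI) (simp add: lookup_mren)

lemma mren_inv: "bij \<pi> \<Longrightarrow> mren \<pi> (mren (inv \<pi>) m) = m"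
  by (rule poly_mapping_eqI) (simp add: lookup_mren bij_imp_bij_inv inv_f_f[OF bij_is_inj] surj_f_inv_f[OF bij_is_surj])

lemma mren_inv2: "bij \<pi> \<Longrightarrow> mren (inv \<pi>) (mren \<pi> m) = m"
  by (rule poly_mapping_eqI) (simp add: lookup_mren bij_imp_bij_inv inv_f_f[OF bij_is_inj] surj_f_inv_f[OF bij_is_surj])

lemma bij_mren: "bij \<pi> \<Longrightarrow> bij (mren \<pi>)"
  by (rule bij_betw_byWitness[where f'="mren (inv \<pi>)"]) (auto simp: mren_inv mren_inv2)

lemma mren_single: "bij \<pi> \<Longrightarrow> mren \<pi> (Poly_Mapping.single (\<pi> j) 1) = Poly_Mapping.single j 1"
  by (rule poly_mapping_eqI) (simp add: lookup_mren lookup_single when_def bij_is_inj inj_eq)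

lemma lookup_pren: "bij \<pi> \<Longrightarrow> Poly_Mapping.lookup (pren \<pi> f) m = Poly_Mapping.lookup f (mren \<pi> m)"
  by (simp add: pren_def Poly_Mapping.map_key.rep_eq bij_is_inj bij_mren)

lemma keys_pren: "bij \<pi> \<Longrightarrow> Poly_Mapping.keys (pren \<pi> f) = mren \<pi> -` Poly_Mapping.keys f"
  by (auto simp: in_keys_iff lookup_pren)

lemma pren_add: "bij \<pi> \<Longrightarrow> pren \<pi> (a + b) = pren \<pi> a + pren \<pi> b"
  by (rule poly_mapping_eqI) (simp add: lookup_pren lookup_add)

lemma pren_0: "bij \<pi> \<Longrightarrow> pren \<pi> 0 = 0"
  by (rule poly_mapping_eqI) (simp add: lookup_pren)

lemma pren_1: "bij \<pi> \<Longrightarrow> pren \<pi> (1::('n,'a::comm_ring_1) mpoly) = 1"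
proof -
  assume b: "bij \<pi>"
  have "mren \<pi> k = 0 \<longleftrightarrow> k = 0" for k
    by (metis b mren_0 mren_inv2 bij_imp_bij_inv)
  thus ?thesis by (intro poly_mapping_eqI) (simp add: lookup_pren b lookup_one when_def)
qed

lemma pren_mult: "bij \<pi> \<Longrightarrow> pren \<pi> (a * b) = pren \<pi> a * (pren \<pi> b :: ('n,'a::comm_ring_1) mpoly)"
proof (rule poly_mapping_eqI)
  fix k
  assume b: "bij \<pi>"
  have bm: "bij (mren \<pi>)" using b by (rule bij_mren)
  have eq: "(mren \<pi> k = mren \<pi> l + mren \<pi> q) \<longleftrightarrow> (k = l + q)" for l q
    by (metis b bm bij_is_inj inj_eq mren_add)
  have "Poly_Mapping.lookup (pren \<pi> (a*b)) k =
     (\<Sum>l. Poly_Mapping.lookup a l * (\<Sum>q. Poly_Mapping.lookup b q when mren \<pi> k = l + q))"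
    by (simp add: lookup_pren b lookup_mult)
  also have "\<dots> = (\<Sum>l. Poly_Mapping.lookup a (mren \<pi> l) * (\<Sum>q. Poly_Mapping.lookup b q when mren \<pi> k = mren \<pi> l + q))"
    by (rule Sum_any.reindex_cong[OF bm]) (simp add: o_def)
  also have "\<dots> = (\<Sum>l. Poly_Mapping.lookup a (mren \<pi> l) * (\<Sum>q. Poly_Mapping.lookup b (mren \<pi> q) when mren \<pi> k = mren \<pi> l + mren \<pi> q))"
    by (intro Sum_any.cong arg_cong2[where f="(*)"] refl Sum_any.reindex_cong[OF bm]) (simp add: o_def)
  also have "\<dots> = Poly_Mapping.lookup (pren \<pi> a * pren \<pi> b) k"
    by (simp add: lookup_pren b lookup_mult eq)
  finally show "Poly_Mapping.lookup (pren \<pi> (a*b)) k = Poly_Mapping.lookup (pren \<pi> a * pren \<pi> b) k" .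
qed

lemma pren_sum: "bij \<pi> \<Longrightarrow> pren \<pi> (\<Sum>x\<in>A. h x) = (\<Sum>x\<in>A. pren \<pi> (h x))"
  by (induction A rule: infinite_finite_induct) (simp_all add: pren_0 pren_add)

lemma pren_prod: "bij \<pi> \<Longrightarrow> pren \<pi> (\<Prod>x\<in>A. h x) = (\<Prod>x\<in>A. pren \<pi> (h x :: ('n,'a::comm_ring_1) mpoly))"
  by (induction A rule: infinite_finite_induct) (simp_all add: pren_1 pren_mult)

lemma pren_power: "bij \<pi> \<Longrightarrow> pren \<pi> (h ^ n) = (pren \<pi> (h :: ('n,'a::comm_ring_1) mpoly)) ^ n"
  by (induction n) (simp_all add: pren_1 pren_mult)

lemma pren_Const: "bij \<pi> \<Longrightarrow> pren \<pi> (Const c :: ('n,'a::comm_ring_1) mpoly) = Const c"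
  unfolding pren_def Const_def
  by (metis Poly_Mapping.map_key_single bij_is_inj bij_mren mren_0)

lemma pren_Var: "bij \<pi> \<Longrightarrow> pren \<pi> (Var j :: ('n,'a::comm_ring_1) mpoly) = Var (\<pi> j)"
  unfolding pren_def Var_def
  by (metis Poly_Mapping.map_key_single bij_is_inj bij_mren mren_single)

lemma pren_subst: "bij \<pi> \<Longrightarrow> pren \<pi> (subst \<phi> f) = subst (\<lambda>i. pren \<pi> (\<phi> i)) (f :: ('n::finite,'a::comm_ring_1) mpoly)"
  unfolding subst_def by (simp add: pren_sum pren_mult pren_prod pren_power pren_Const)

lemma pren_lin_act:
  fixes g :: "'a::field^'n::finite^'n"
  assumes b: "bij \<pi>"
  shows "lin_act (\<chi> i k. g$i$(inv \<pi> k)) f = pren \<pi> (lin_act g f)"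
proof -
  have "pren \<pi> (\<Sum>j\<in>UNIV. Const (g$i$j) * Var j) = (\<Sum>k\<in>UNIV. Const ((\<chi> i k. g$i$(inv \<pi> k))$i$k) * Var k)" for i
  proof -
    have "pren \<pi> (\<Sum>j\<in>UNIV. Const (g$i$j) * Var j) = (\<Sum>j\<in>UNIV. Const (g$i$j) * Var (\<pi> j))"
      by (simp add: b pren_sum pren_mult pren_Const pren_Var)
    also have "\<dots> = (\<Sum>k\<in>UNIV. Const (g$i$(inv \<pi> k)) * Var k)"
      by (rule sum.reindex_bij_witness[where i="inv \<pi>" and j=\<pi>])
         (auto simp: inv_f_f[OF bij_is_inj[OF b]] surj_f_inv_f[OF bij_is_surj[OF b]])
    finally show ?thesis by simp
  qed
  thus ?thesis unfolding lin_act_def by (simp add: pren_subst b)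
qed

lemma wdot_mren: "bij \<pi> \<Longrightarrow> wdot \<omega> (mren \<pi> m) = wdot (\<omega> \<circ> inv \<pi>) m"
  unfolding wdot_def
  by (rule sum.reindex_bij_witness[where i="inv \<pi>" and j=\<pi>])
     (auto simp: lookup_mren inv_f_f[OF bij_is_inj] surj_f_inv_f[OF bij_is_surj])

lemma in_form_pren:
  assumes b: "bij \<pi>"
  shows "in_form (\<omega> \<circ> inv \<pi>) (pren \<pi> f) = pren \<pi> (in_form \<omega> (f::('n::finite,'a::comm_ring_1) mpoly))"
proof -
  have surj: "surj (mren \<pi>)" using bij_mren[OF b] bij_is_surj by blast
  have S: "wdot (\<omega> \<circ> inv \<pi>) ` Poly_Mapping.keys (pren \<pi> f) = wdot \<omega> ` Poly_Mapping.keys f"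
  proof -
    have "wdot (\<omega> \<circ> inv \<pi>) ` Poly_Mapping.keys (pren \<pi> f) = wdot \<omega> ` (mren \<pi> ` (mren \<pi> -` Poly_Mapping.keys f))"
    proof -
      have "wdot (\<omega> \<circ> inv \<pi>) ` Poly_Mapping.keys (pren \<pi> f) = (wdot \<omega> \<circ> mren \<pi>) ` (mren \<pi> -` Poly_Mapping.keys f)"
        by (rule image_cong) (simp_all add: keys_pren b wdot_mren)
      thus ?thesis by (simp only: image_comp[symmetric])
    qed
    also have "mren \<pi> ` (mren \<pi> -` Poly_Mapping.keys f) = Poly_Mapping.keys f"
      using surj by (simp add: image_vimage_eq)
    finally show ?thesis .
  qed
  show ?thesis
    by (rule poly_mapping_eqI)
       (simp add: in_form_def lookup_mapp lookup_pren b keys_pren S[unfolded keys_pren[OF b]] wdot_mren)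
qed

lemma is_monomial_pren:
  assumes b: "bij \<pi>"
  shows "is_monomial (pren \<pi> h) \<longleftrightarrow> is_monomial (h::('n,'a::comm_ring_1) mpoly)"
  unfolding is_monomial_def keys_pren[OF b]
  using bij_mren[OF b] by (simp add: card_vimage_inj bij_is_inj bij_is_surj)

lemma trop_pren:
  assumes b: "bij \<pi>" and w: "\<omega> \<in> trop J"
  shows "\<omega> \<circ> inv \<pi> \<in> trop (pren \<pi> ` (J::('n::finite,'a::comm_ring_1) mpoly set))"
  using w by (auto simp: trop_def in_form_pren[OF b] is_monomial_pren[OF b])


theorem theorem7p4:
  fixes I :: "('n::finite, 'a::field_char_0) mpoly set"
    and F :: "('n \<Rightarrow> real) set" and \<omega> :: "'n \<Rightarrow> real" and \<sigma> :: "'n \<Rightarrow> 'n"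
  assumes alg_closed: "\<forall>p :: 'a poly. degree p \<ge> 1 \<longrightarrow> (\<exists>x. poly p x = 0)"
    and graded: "graded_ideal I" and nonzero: "I \<noteq> {0}"
    and gT: "is_generic_trop_var I F"
    and "\<omega> \<in> F" and "\<sigma> permutes UNIV"
  shows "\<omega> \<circ> \<sigma> \<in> F"
proof -
  have bs: "bij \<sigma>" using assms(6) by (rule permutes_bij)
  define \<pi> where "\<pi> = inv \<sigma>"
  have b: "bij \<pi>" unfolding \<pi>_def by (rule bij_imp_bij_inv[OF bs])
  have ip: "inv \<pi> = \<sigma>" unfolding \<pi>_def by (rule inv_inv_eq[OF bs])
  have pip: "\<pi> (inv \<pi> k) = k" for k using b by (simp add: surj_f_inv_f[OF bij_is_surj])
  from gT obtain U :: "('a^'n^'n) set" where zo: "zariski_open_GL U" and ne: "U \<noteq> {}"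
    and all: "\<forall>g\<in>U. trop (lin_act g ` I) = F"
    unfolding is_generic_trop_var_def by blast
  from zo obtain P :: "('n \<times> 'n, 'a) mpoly set" where
    UP: "U = {g. invertible g \<and> (\<exists>p\<in>P. mp_eval p (\<lambda>(i,j). g$i$j) \<noteq> 0)}"
    unfolding zariski_open_GL_def by blast
  from ne obtain a where "a \<in> U" by blast
  then obtain p where ia: "invertible a" and pP: "p \<in> P" and pa: "mp_eval p (\<lambda>(i,j). a$i$j) \<noteq> 0"
    using UP by blast
  from ne obtain c where "c \<in> U" by blast
  then obtain q where ic: "invertible c" and qP: "q \<in> P" and qc: "mp_eval q (\<lambda>(i,j). c$i$j) \<noteq> 0"
    using UP by blast
  define cp :: "'a^'n^'n \<Rightarrow> 'a^'n^'n" where "cp g = (\<chi> i k. g$i$(inv \<pi> k))" for g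
  define bb :: "'a^'n^'n" where "bb = (\<chi> i j. c$i$(\<pi> j))"
  define M where "M t = (\<chi> i j. a$i$j + t * (bb$i$j - a$i$j))" for t
  define a' where "a' = cp a"
  have cpM: "cp (M t) = (\<chi> i k. a'$i$k + t * (c$i$k - a'$i$k))" for t
    by (simp add: cp_def M_def a'_def bb_def pip)
  obtain D1 where D1: "\<forall>t. mp_eval p (\<lambda>v. (\<lambda>(i,j). a$i$j) v + t * (\<lambda>(i,j). bb$i$j - a$i$j) v) = poly D1 t"
    using mp_eval_linear_poly by blast
  obtain D2 where D2: "\<forall>t. det (\<chi> i j. a$i$j + t * (\<chi> i j. bb$i$j - a$i$j)$i$j) = poly D2 t"
    using det_linear_poly by blast
  obtain D3 where D3: "\<forall>t. mp_eval q (\<lambda>v. (\<lambda>(i,j). a'$i$j) v + t * (\<lambda>(i,j). c$i$j - a'$i$j) v) = poly D3 t"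
    using mp_eval_linear_poly by blast
  obtain D4 where D4: "\<forall>t. det (\<chi> i j. a'$i$j + t * (\<chi> i j. c$i$j - a'$i$j)$i$j) = poly D4 t"
    using det_linear_poly by blast
  have e1: "mp_eval p (\<lambda>(i,j). M t$i$j) = poly D1 t" for t
    using D1[rule_format, of t] by (simp add: M_def case_prod_beta')
  have e2: "det (M t) = poly D2 t" for t
    using D2[rule_format, of t] by (simp add: M_def)
  have e3: "mp_eval q (\<lambda>(i,j). cp (M t)$i$j) = poly D3 t" for t
    using D3[rule_format, of t] by (simp add: cpM case_prod_beta')
  have e4: "det (cp (M t)) = poly D4 t" for t
    using D4[rule_format, of t] by (simp add: cpM)
  have M0: "M 0 = a" by (simp add: M_def vec_eq_iff)
  have M1: "cp (M 1) = c" by (simp add: cpM vec_eq_iff)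
  have "D1 \<noteq> 0" using e1[of 0] pa M0 by auto
  moreover have "D2 \<noteq> 0" using e2[of 0] ia M0 by (auto simp: invertible_det_nz)
  moreover have "D3 \<noteq> 0" using e3[of 1] qc M1 by auto
  moreover have "D4 \<noteq> 0" using e4[of 1] ic M1 by (auto simp: invertible_det_nz)
  ultimately obtain t where "\<forall>D\<in>{D1,D2,D3,D4}. poly D t \<noteq> 0"
    using avoid_roots[of "{D1,D2,D3,D4}"] by auto
  hence t: "poly D1 t \<noteq> 0" "poly D2 t \<noteq> 0" "poly D3 t \<noteq> 0" "poly D4 t \<noteq> 0" by auto
  have gU: "M t \<in> U" unfolding UP
    using t(1,2) e1[of t] e2[of t] pP by (auto simp: invertible_det_nz intro!: bexI[of _ p])
  have gU': "cp (M t) \<in> U" unfolding UP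
    using t(3,4) e3[of t] e4[of t] qP by (auto simp: invertible_det_nz intro!: bexI[of _ q])
  have F1: "trop (lin_act (M t) ` I) = F" using all gU by blast
  have F2: "trop (lin_act (cp (M t)) ` I) = F" using all gU' by blast
  have eqI: "lin_act (cp (M t)) ` I = pren \<pi> ` (lin_act (M t) ` I)"
    unfolding cp_def by (simp add: pren_lin_act[OF b] image_image)
  have "\<omega> \<circ> inv \<pi> \<in> trop (pren \<pi> ` (lin_act (M t) ` I))"
    by (rule trop_pren[OF b]) (use F1 assms(5) in simp)
  thus ?thesis using eqI F2 ip by simp
qed

end
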